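(* Let $a=a_0+a_1e_1+a_2e_2+a_3e_3$ and $b=b_0+b_1e_1+b_2e_2+b_3e_3$ be nonzero elements of $C\ell_2$ with $H_a=H_b=0$, and let $d\in C\ell_2$. Then the equation $axb=d$ (in the unknown $x\in C\ell_2$) is solvable if and only if $$\frac{aa'db'b}{16(a_0^2+a_3^2)(b_0^2+b_3^2)}=d,$$ and in that case the general solution is $$x=\frac{a'db'}{16(a_0^2+a_3^2)(b_0^2+b_3^2)}+y-\frac{a'aybb'}{16(a_0^2+a_3^2)(b_0^2+b_3^2)},\qquad y\in C\ell_2 \text{ arbitrary}.$$
   Context: $C\ell_2$ is the 4-dimensional real associative algebra with basis $1,e_1,e_2,e_3$ and multiplication $e_1^2=e_2^2=1$, $e_3^2=-1$, $e_1e_2=e_3=-e_2e_1$, $e_1e_3=e_2=-e_3e_1$, $e_3e_2=e_1=-e_2e_3$. For $a=a_0+a_1e_1+a_2e_2+a_3e_3$ ($a_i\in\mathbb{R}$): $a'=a_0+a_1e_1+a_2e_2-a_3e_3$ and $H_a=a_0^2-a_1^2-a_2^2+a_3^2$. *)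

theory Defs
  imports Complex_Main
begin

text \<open>The Clifford algebra Cl_2: elements a0 + a1 e1 + a2 e2 + a3 e3 with
  e1^2 = e2^2 = 1, e3^2 = -1, e1 e2 = e3 = - e2 e1, e1 e3 = e2 = - e3 e1,
  e3 e2 = e1 = - e2 e3.\<close>

datatype cl2 = Cl2 (c0: real) (c1: real) (c2: real) (c3: real)

instantiation cl2 :: "{zero, one, plus, minus, uminus, times}"
begin
definition zero_cl2 :: cl2 where "0 = Cl2 0 0 0 0"
definition one_cl2 :: cl2 where "1 = Cl2 1 0 0 0"
definition plus_cl2 :: "cl2 \<Rightarrow> cl2 \<Rightarrow> cl2" where
  "a + b = Cl2 (c0 a + c0 b) (c1 a + c1 b) (c2 a + c2 b) (c3 a + c3 b)"
definition minus_cl2 :: "cl2 \<Rightarrow> cl2 \<Rightarrow> cl2" where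
  "a - b = Cl2 (c0 a - c0 b) (c1 a - c1 b) (c2 a - c2 b) (c3 a - c3 b)"
definition uminus_cl2 :: "cl2 \<Rightarrow> cl2" where
  "- a = Cl2 (- c0 a) (- c1 a) (- c2 a) (- c3 a)"
definition times_cl2 :: "cl2 \<Rightarrow> cl2 \<Rightarrow> cl2" where
  "a * b = Cl2
     (c0 a * c0 b + c1 a * c1 b + c2 a * c2 b - c3 a * c3 b)
     (c0 a * c1 b + c1 a * c0 b + c3 a * c2 b - c2 a * c3 b)
     (c0 a * c2 b + c2 a * c0 b + c1 a * c3 b - c3 a * c1 b)
     (c0 a * c3 b + c3 a * c0 b + c1 a * c2 b - c2 a * c1 b)"
instance ..
end

definition cl2_scale :: "real \<Rightarrow> cl2 \<Rightarrow> cl2" where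
  "cl2_scale r a = Cl2 (r * c0 a) (r * c1 a) (r * c2 a) (r * c3 a)"

definition cl2_prime :: "cl2 \<Rightarrow> cl2" where
  "cl2_prime a = Cl2 (c0 a) (c1 a) (c2 a) (- c3 a)"

definition cl2_H :: "cl2 \<Rightarrow> real" where
  "cl2_H a = (c0 a)^2 - (c1 a)^2 - (c2 a)^2 + (c3 a)^2"

end

theory Submission
  imports Defs
begin

lemma cl2_eqI: "c0 x = c0 y \<Longrightarrow> c1 x = c1 y \<Longrightarrow> c2 x = c2 y \<Longrightarrow> c3 x = c3 y \<Longrightarrow> x = y"
  by (cases x; cases y) auto

instance cl2 :: ring_1
  by standard (auto intro!: cl2_eqI simp: zero_cl2_def one_cl2_def plus_cl2_def minus_cl2_def
      uminus_cl2_def times_cl2_def algebra_simps)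

definition cs :: "real \<Rightarrow> cl2" where "cs r = Cl2 r 0 0 0"

lemma cs_comm: "cs r * x = x * cs r"
  by (rule cl2_eqI) (auto simp: cs_def times_cl2_def)

lemma cs_mult: "cs r * cs t = cs (r * t)"
  by (rule cl2_eqI) (auto simp: cs_def times_cl2_def)

lemma cs_one: "cs 1 = 1"
  by (simp add: cs_def one_cl2_def)

lemma scale_cs: "cl2_scale r x = cs r * x"
  by (rule cl2_eqI) (auto simp: cs_def times_cl2_def cl2_scale_def)

lemma key: "cl2_H a = 0 \<Longrightarrow> a * cl2_prime a * a = cs (4 * ((c0 a)^2 + (c3 a)^2)) * a"
proof -
  assume h: "cl2_H a = 0"
  obtain p q r t where a: "a = Cl2 p q r t" by (cases a)
  from h have h': "p^2 - q^2 - r^2 + t^2 = 0" by (simp add: a cl2_H_def)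
  show ?thesis unfolding a
    apply (rule cl2_eqI)
    apply (simp_all add: cs_def times_cl2_def cl2_prime_def)
    using h' apply algebra
    using h' apply algebra
    using h' apply algebra
    using h' apply algebra
    done
qed

lemma pos: "a \<noteq> 0 \<Longrightarrow> cl2_H a = 0 \<Longrightarrow> (c0 a)^2 + (c3 a)^2 > 0"
proof (rule ccontr)
  assume "a \<noteq> 0" "cl2_H a = 0" "\<not> (c0 a)^2 + (c3 a)^2 > 0"
  then have "(c0 a)^2 + (c3 a)^2 = 0"
    by (metis add_nonneg_nonneg zero_le_power2 order_less_le)
  then have "c0 a = 0" "c3 a = 0" by (simp_all add: sum_power2_eq_zero_iff)
  then have "(c0 a)^2 = 0" "(c3 a)^2 = 0" by simp_all
  with \<open>cl2_H a = 0\<close> have "(c1 a)^2 + (c2 a)^2 = 0" unfolding cl2_H_def by linarith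
  then have "c1 a = 0" "c2 a = 0" by (metis sum_power2_eq_zero_iff)+
  with \<open>c0 a = 0\<close> \<open>c3 a = 0\<close> \<open>a \<noteq> 0\<close> show False
    by (cases a) (auto simp: zero_cl2_def)
qed

lemma cs_left: "x * (cs r * y) = cs r * (x * y)"
  by (metis cs_comm mult.assoc)

lemma cs_left2: "cs t * (cs r * y) = cs (t * r) * y"
  by (metis cs_mult mult.assoc)

theorem theorem4p1:
  fixes a b d :: cl2
  assumes "a \<noteq> 0" and "b \<noteq> 0" and "cl2_H a = 0" and "cl2_H b = 0"
  defines "N \<equiv> 16 * ((c0 a)^2 + (c3 a)^2) * ((c0 b)^2 + (c3 b)^2)"
  shows "((\<exists>x. a * x * b = d) \<longleftrightarrow>
            cl2_scale (1 / N) (a * cl2_prime a * d * cl2_prime b * b) = d)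
       \<and> (cl2_scale (1 / N) (a * cl2_prime a * d * cl2_prime b * b) = d \<longrightarrow>
            {x. a * x * b = d} =
            {cl2_scale (1 / N) (cl2_prime a * d * cl2_prime b) + y
               - cl2_scale (1 / N) (cl2_prime a * a * y * b * cl2_prime b) | y. True})"
proof -
  define A where "A = cl2_prime a"
  define B where "B = cl2_prime b"
  define KA where "KA = 4 * ((c0 a)^2 + (c3 a)^2)"
  define KB where "KB = 4 * ((c0 b)^2 + (c3 b)^2)"
  have ka: "a * A * a = cs KA * a" using key[OF assms(3)] by (simp add: A_def KA_def)
  have kb: "b * B * b = cs KB * b" using key[OF assms(4)] by (simp add: B_def KB_def)
  have "KA > 0" "KB > 0" using pos[OF assms(1,3)] pos[OF assms(2,4)] by (simp_all add: KA_def KB_def)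
  have NK: "N = KA * KB" by (simp add: N_def KA_def KB_def algebra_simps)
  have inv: "1 / N * (KA * KB) = 1" using \<open>KA > 0\<close> \<open>KB > 0\<close> by (simp add: NK)
  have ka': "a * (A * (a * z)) = cs KA * (a * z)" for z
    by (metis ka mult.assoc)
  have kb': "b * (B * (b * z)) = cs KB * (b * z)" for z
    by (metis kb mult.assoc)
  have kb'': "b * (B * b) = cs KB * b"
    by (metis kb mult.assoc)
  have main: "cl2_scale (1 / N) (a * A * (a * x * b) * B * b) = a * x * b" for x
  proof -
    have "a * A * (a * x * b) * B * b = a * (A * (a * (x * (b * (B * b)))))"
      by (simp add: mult.assoc)
    also have "\<dots> = a * (A * (a * (x * (cs KB * b))))" by (simp only: kb'')
    also have "\<dots> = a * (A * (a * (cs KB * (x * b))))" by (simp only: cs_left)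
    also have "\<dots> = cs KB * (a * (A * (a * (x * b))))" by (simp only: cs_left)
    also have "\<dots> = cs KB * (cs KA * (a * (x * b)))" by (simp only: ka')
    also have "\<dots> = cs (KB * KA) * (a * x * b)" by (simp only: cs_left2 mult.assoc)
    finally have "cl2_scale (1 / N) (a * A * (a * x * b) * B * b) = cs (1/N) * (cs (KB * KA) * (a * x * b))"
      by (simp only: scale_cs)
    also have "\<dots> = cs (1/N * (KB * KA)) * (a * x * b)" by (simp only: cs_left2)
    also have "\<dots> = a * x * b" 
    proof -
      have "1/N * (KB * KA) = 1" using inv by (simp only: mult.commute[of KB])
      then show ?thesis by (simp only: cs_one mult_1_left)
    qed
    finally show ?thesis .
  qed
  have P1: "(\<exists>x. a * x * b = d) \<longleftrightarrow> cl2_scale (1 / N) (a * A * d * B * b) = d"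
  proof
    assume "\<exists>x. a * x * b = d"
    then obtain x where "a * x * b = d" by blast
    then show "cl2_scale (1 / N) (a * A * d * B * b) = d" using main[of x] by simp
  next
    assume h: "cl2_scale (1 / N) (a * A * d * B * b) = d"
    have "a * cl2_scale (1 / N) (A * d * B) * b = d"
      using h by (simp only: scale_cs cs_left mult.assoc cs_comm[of _ b])
    then show "\<exists>x. a * x * b = d" by blast
  qed
  have P2: "{x. a * x * b = d} =
            {cl2_scale (1 / N) (A * d * B) + y
               - cl2_scale (1 / N) (A * a * y * b * B) | y. True}"
    if h: "cl2_scale (1 / N) (a * A * d * B * b) = d"
  proof
    show "{x. a * x * b = d} \<subseteq> {cl2_scale (1 / N) (A * d * B) + y
               - cl2_scale (1 / N) (A * a * y * b * B) | y. True}"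
    proof
      fix x assume "x \<in> {x. a * x * b = d}"
      then have e: "a * x * b = d" by simp
      have "x = cl2_scale (1 / N) (A * d * B) + x - cl2_scale (1 / N) (A * a * x * b * B)"
        by (simp add: e[symmetric] mult.assoc)
      then show "x \<in> {cl2_scale (1 / N) (A * d * B) + y
               - cl2_scale (1 / N) (A * a * y * b * B) | y. True}" by blast
    qed
  next
    show "{cl2_scale (1 / N) (A * d * B) + y
               - cl2_scale (1 / N) (A * a * y * b * B) | y. True} \<subseteq> {x. a * x * b = d}"
    proof
      fix x assume "x \<in> {cl2_scale (1 / N) (A * d * B) + y
               - cl2_scale (1 / N) (A * a * y * b * B) | y. True}"
      then obtain y where x: "x = cl2_scale (1 / N) (A * d * B) + y
               - cl2_scale (1 / N) (A * a * y * b * B)" by blast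
      have "a * x * b = cl2_scale (1 / N) (a * A * d * B * b) + a * y * b
               - cl2_scale (1 / N) (a * A * (a * y * b) * B * b)"
        by (simp only: x distrib_left distrib_right left_diff_distrib right_diff_distrib scale_cs cs_left mult.assoc cs_comm[of _ b])
      also have "\<dots> = d" using h main[of y] by simp
      finally show "x \<in> {x. a * x * b = d}" by simp
    qed
  qed
  show ?thesis using P1 P2 by (simp add: A_def B_def)
qed

end
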